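(* Let $\mathcal G$ be a $1$-step solvable $\mathrm{MD}_{n-2}(n)$-algebra with $n\geq 6$ and $\dim\mathcal G^1\geq 3$. Then $n=6$ and $\dim\mathcal G^1=4$.
   Context: All Lie algebras are finite-dimensional over $\mathbb R$; $\mathcal G^1=[\mathcal G,\mathcal G]$. $\mathcal G$ is $1$-step solvable if $\mathcal G^1$ is commutative and nonzero. For the connected simply connected Lie group of $\mathcal G$, the coadjoint orbit of $F\in\mathcal G^*$ has dimension $\operatorname{rank}\bigl(F([x_i,x_j])\bigr)_{n\times n}$ for any basis $\{x_i\}$; it is non-trivial iff $F|_{\mathcal G^1}\neq0$. An $\mathrm{MD}_k(n)$-algebra is an $n$-dimensional real solvable Lie algebra all of whose non-trivial coadjoint orbits have dimension $k$, i.e. $\operatorname{rank}\bigl(F([x_i,x_j])\bigr)=k$ whenever $F|_{\mathcal G^1}\neq 0$. *)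

theory Defs
  imports "HOL-Analysis.Analysis"
begin

text \<open>A finite-dimensional real Lie algebra of dimension n is modelled as the
  space real^'n (n = CARD('n)) equipped with a bracket br.\<close>

definition lie_algebra :: "(real^'n \<Rightarrow> real^'n \<Rightarrow> real^'n) \<Rightarrow> bool" where
  "lie_algebra br \<longleftrightarrow> bilinear br \<and> (\<forall>x. br x x = 0) \<and>
     (\<forall>x y z. br x (br y z) + br y (br z x) + br z (br x y) = 0)"

definition derived :: "(real^'n \<Rightarrow> real^'n \<Rightarrow> real^'n) \<Rightarrow> (real^'n) set \<Rightarrow> (real^'n) set" where
  "derived br S = span {br x y | x y. x \<in> S \<and> y \<in> S}"

definition solvable_lie :: "(real^'n \<Rightarrow> real^'n \<Rightarrow> real^'n) \<Rightarrow> bool" where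
  "solvable_lie br \<longleftrightarrow> lie_algebra br \<and> (\<exists>m. (derived br ^^ m) UNIV = {0})"

definition one_step_solvable :: "(real^'n \<Rightarrow> real^'n \<Rightarrow> real^'n) \<Rightarrow> bool" where
  "one_step_solvable br \<longleftrightarrow> lie_algebra br \<and> derived br UNIV \<noteq> {0} \<and>
     (\<forall>x\<in>derived br UNIV. \<forall>y\<in>derived br UNIV. br x y = 0)"

text \<open>Dimension of the coadjoint orbit of F: rank of (F([x_i,x_j])) in the standard basis.\<close>
definition coadj_orbit_dim :: "(real^'n \<Rightarrow> real^'n \<Rightarrow> real^'n) \<Rightarrow> (real^'n \<Rightarrow> real) \<Rightarrow> nat" where
  "coadj_orbit_dim br F = rank (\<chi> i j. F (br (axis i 1) (axis j 1)))"

text \<open>MD_k(n)-algebra (n = CARD('n)): solvable, and every non-trivial coadjoint orbit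
  (F linear with F restricted to G^1 nonzero) has dimension k.\<close>
definition MD_algebra :: "nat \<Rightarrow> (real^'n \<Rightarrow> real^'n \<Rightarrow> real^'n) \<Rightarrow> bool" where
  "MD_algebra k br \<longleftrightarrow> solvable_lie br \<and>
     (\<forall>F. linear F \<and> (\<exists>x\<in>derived br UNIV. F x \<noteq> 0) \<longrightarrow> coadj_orbit_dim br F = k)"

end

theory Submission
  imports Defs "HOL-Computational_Algebra.Fundamental_Theorem_Algebra"
begin

lemma rank_nullity_sub:
  fixes f :: "'a::euclidean_space \<Rightarrow> 'b::euclidean_space"
  assumes lf: "linear f" and S: "subspace S"
  shows "dim S = dim {x\<in>S. f x = 0} + dim (f ` S)"
proof -
  let ?K = "{x\<in>S. f x = 0}"
  have K: "subspace ?K" using S lf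
    by (auto simp: subspace_def linear_add linear_scale linear_0)
  let ?C = "{y \<in> S. \<forall>x \<in> ?K. orthogonal x y}"
  have C: "subspace ?C"
    using S by (auto simp: subspace_def orthogonal_clauses)
  have d1: "dim ?C + dim ?K = dim S"
    by (rule dim_subspace_orthogonal_to_vectors[OF K S]) auto
  have inj: "inj_on f (span ?C)"
  proof (rule inj_onI)
    fix x y assume x: "x \<in> span ?C" and y: "y \<in> span ?C" and e: "f x = f y"
    have "x - y \<in> ?C" using x y C span_eq_iff by (metis (no_types, lifting) subspace_diff)
    moreover have "f (x - y) = 0" using e lf by (simp add: linear_diff)
    ultimately have "x - y \<in> ?K" "x - y \<in> ?C" by auto
    hence "orthogonal (x - y) (x - y)" by auto
    hence "x - y = 0" by (simp only: orthogonal_self)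
    thus "x = y" by simp
  qed
  have img: "f ` S = f ` ?C"
  proof
    show "f ` ?C \<subseteq> f ` S" by auto
    show "f ` S \<subseteq> f ` ?C"
    proof
      fix z assume "z \<in> f ` S"
      then obtain x where x: "x \<in> S" "z = f x" by auto
      obtain y w where y: "y \<in> span ?K" and w: "\<And>v. v \<in> span ?K \<Longrightarrow> orthogonal w v" and xyw: "x = y + w"
        by (rule orthogonal_subspace_decomp_exists[of ?K x], rule that, assumption+)
      have spK: "span ?K = ?K" by (rule span_eq_iff[THEN iffD2, OF K])
      have yK: "y \<in> ?K" using y unfolding spK .
      have weq: "w = x - y" using xyw by (simp add: algebra_simps)
      have yS: "y \<in> S" using yK by blast
      have wS: "w \<in> S" unfolding weq by (rule subspace_diff[OF S x(1) yS])
      have "\<forall>v\<in>?K. orthogonal v w"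
      proof
        fix v assume v: "v \<in> ?K"
        have "orthogonal w v" by (rule w[OF span_base[OF v]])
        thus "orthogonal v w" by (simp add: orthogonal_commute)
      qed
      hence "w \<in> ?C" using wS by (simp only: mem_Collect_eq)
      moreover have "f x = f w"
      proof -
        have "f x = f y + f w" unfolding xyw by (rule linear_add[OF lf])
        thus ?thesis using yK by simp
      qed
      ultimately show "z \<in> f ` ?C" using x(2) by (simp add: image_eqI)
    qed
  qed
  have "dim (f ` ?C) = dim ?C" using dim_image_eq[OF lf inj] .
  thus ?thesis using d1 img by simp
qed


definition opoly :: "real poly \<Rightarrow> ('a::real_vector \<Rightarrow> 'a) \<Rightarrow> 'a \<Rightarrow> 'a" where
  "opoly p S = fold_coeffs (\<lambda>a g v. a *\<^sub>R v + S (g v)) p (\<lambda>v. 0)"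

lemma opoly_0 [simp]: "opoly 0 S v = 0"
  by (simp add: opoly_def)

lemma opoly_pCons [simp]:
  assumes "linear S"
  shows "opoly (pCons a p) S v = a *\<^sub>R v + S (opoly p S v)"
proof (cases "a = 0 \<and> p = 0")
  case True
  then show ?thesis using linear_0[OF assms] by (simp add: opoly_def)
next
  case False
  then show ?thesis by (auto simp: opoly_def)
qed

lemma opoly_add:
  assumes "linear S"
  shows "opoly (p + q) S v = opoly p S v + opoly q S v"
proof (induction p q rule: poly_induct2)
  case 0 then show ?case by simp
next
  case (pCons a p b q)
  then show ?case using assms by (simp add: linear_add algebra_simps)
qed

lemma opoly_smult:
  assumes "linear S"
  shows "opoly (smult c p) S v = c *\<^sub>R opoly p S v"
proof (induction p)
  case 0 then show ?case by simp
next
  case (pCons a p)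
  then show ?case using assms by (simp add: linear_add linear_scale algebra_simps)
qed

lemma opoly_mult:
  assumes "linear S"
  shows "opoly (p * q) S v = opoly p S (opoly q S v)"
proof (induction p)
  case 0 then show ?case by simp
next
  case (pCons a p)
  have "opoly (pCons a p * q) S v = opoly (smult a q + pCons 0 (p * q)) S v" by simp
  also have "\<dots> = a *\<^sub>R opoly q S v + S (opoly (p*q) S v)"
    using assms by (simp add: opoly_add opoly_smult)
  finally show ?case using pCons assms by simp
qed

lemma opoly_linear_add:
  assumes "linear S"
  shows "opoly p S (x + y) = opoly p S x + opoly p S y"
proof (induction p)
  case 0 then show ?case by simp
next
  case (pCons a p)
  then show ?case using assms by (simp add: linear_add algebra_simps)
qed

lemma opoly_linear_scale:
  assumes "linear S"
  shows "opoly p S (c *\<^sub>R x) = c *\<^sub>R opoly p S x"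
proof (induction p)
  case 0 then show ?case by simp
next
  case (pCons a p)
  then show ?case using assms by (simp add: linear_scale algebra_simps)
qed

lemma linear_opoly:
  assumes "linear S"
  shows "linear (opoly p S)"
  by (rule linearI) (simp_all add: opoly_linear_add opoly_linear_scale assms)

lemma opoly_in:
  assumes "linear S" "subspace U" "S ` U \<subseteq> U" "v \<in> U"
  shows "opoly p S v \<in> U"
proof (induction p)
  case 0 then show ?case using assms(2) by (simp add: subspace_0)
next
  case (pCons a p)
  then show ?case using assms by (auto simp: subspace_add subspace_scale)
qed

lemma opoly_commute:
  assumes "linear S" "linear T" "subspace U" "S ` U \<subseteq> U"
    and "\<And>x. x \<in> U \<Longrightarrow> T (S x) = S (T x)" "v \<in> U"
  shows "T (opoly p S v) = opoly p S (T v)"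
proof (induction p)
  case 0 then show ?case using assms linear_0 by simp
next
  case (pCons a p)
  have "opoly p S v \<in> U" using opoly_in assms by blast
  then show ?case using pCons assms by (simp add: linear_add linear_scale)
qed

lemma opoly_monom:
  assumes "linear S"
  shows "opoly (monom a k) S v = a *\<^sub>R (S ^^ k) v"
proof (induction k)
  case 0 then show ?case using assms by (simp add: monom_0 linear_0)
next
  case (Suc k)
  then show ?case using assms by (simp add: monom_Suc linear_scale)
qed

lemma opoly_sum:
  assumes "linear S"
  shows "opoly (\<Sum>k\<in>I. p k) S v = (\<Sum>k\<in>I. opoly (p k) S v)"
proof (induction I rule: infinite_finite_induct)
  case (insert x F) then show ?case using assms by (simp add: opoly_add)
qed simp_all

lemma opoly_lin [simp]: "linear S \<Longrightarrow> opoly [:c0, c1:] S v = c0 *\<^sub>R v + c1 *\<^sub>R S v"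
  by (simp add: linear_0 linear_scale)

lemma opoly_quad [simp]: "linear S \<Longrightarrow> opoly [:c0, c1, c2:] S v = c0 *\<^sub>R v + S (c1 *\<^sub>R v + c2 *\<^sub>R S v)"
  by (simp add: linear_0 linear_scale)


abbreviation cp :: "real poly \<Rightarrow> complex poly" where "cp \<equiv> map_poly complex_of_real"

lemma cp_pCons: "cp (pCons a p) = pCons (complex_of_real a) (cp p)"
  by (intro poly_eqI) (auto simp: coeff_map_poly coeff_pCons split: nat.splits)

lemma cp_add: "cp (p + q) = cp p + cp q"
  by (intro poly_eqI) (simp add: coeff_map_poly)

lemma cp_smult: "cp (smult a p) = smult (complex_of_real a) (cp p)"
  by (intro poly_eqI) (simp add: coeff_map_poly)

lemma cp_mult: "cp (p * q) = cp p * cp q"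
proof (induction p)
  case 0 then show ?case by simp
next
  case (pCons a p)
  show ?case by (simp add: cp_add cp_smult cp_pCons pCons)
qed

lemma poly_cp_real: "poly (cp p) (complex_of_real x) = complex_of_real (poly p x)"
  by (induction p) (simp_all add: cp_pCons)

lemma lin_poly_form:
  fixes t :: "'a::comm_ring_1 poly"
  assumes "degree t \<le> 1"
  shows "t = [:coeff t 0, coeff t 1:]"
proof (intro poly_eqI)
  fix n show "coeff t n = coeff [:coeff t 0, coeff t 1:] n"
  proof (cases n)
    case 0 then show ?thesis by simp
  next
    case (Suc m)
    show ?thesis
    proof (cases m)
      case 0 then show ?thesis using Suc by simp
    next
      case (Suc k)
      then have "coeff t n = 0" using \<open>n = Suc m\<close> assms by (intro coeff_eq_0) simp
      then show ?thesis using Suc \<open>n = Suc m\<close> by simp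
    qed
  qed
qed

lemma real_poly_factor:
  fixes q :: "real poly"
  assumes "degree q > 0"
  shows "\<exists>d r. q = d * r \<and> ((\<exists>x. d = [:-x,1:]) \<or> (\<exists>b c. b^2 < 4*c \<and> d = [:c,b,1:]))"
proof -
  have "degree (cp q) = degree q" by (rule degree_map_poly) simp
  hence "\<not> constant (poly (cp q))" using assms constant_degree[of "cp q"] by simp
  then obtain z where z: "poly (cp q) z = 0" using fundamental_theorem_of_algebra by blast
  show ?thesis
  proof (cases "Im z = 0")
    case True
    hence zr: "z = complex_of_real (Re z)" by (simp add: complex_eq_iff)
    have "poly q (Re z) = 0" using z poly_cp_real[of q "Re z"] zr by simp
    then obtain r where "q = [:- Re z, 1:] * r" using poly_eq_0_iff_dvd by (metis dvdE)
    thus ?thesis by blast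
  next
    case False
    define d where "d = [:Re z ^ 2 + Im z ^ 2, -2 * Re z, 1:]"
    have dnz: "d \<noteq> 0" unfolding d_def by simp
    have degd: "degree d = 2" unfolding d_def by simp
    have pd: "poly (cp d) z = 0"
      unfolding d_def by (simp add: cp_pCons complex_eq_iff power2_eq_square algebra_simps)
    define t where "t = q mod d"
    have qe: "q = (q div d) * d + t" unfolding t_def by simp
    have "cp q = cp (q div d) * cp d + cp t" using qe by (metis cp_add cp_mult)
    hence "poly (cp q) z = poly (cp (q div d)) z * poly (cp d) z + poly (cp t) z" by simp
    hence pt: "poly (cp t) z = 0" using z pd by simp
    have "degree t \<le> 1"
      using degree_mod_less[OF dnz, of q] degd unfolding t_def by auto
    hence tf: "t = [:coeff t 0, coeff t 1:]" by (rule lin_poly_form)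
    have "poly (cp t) z = complex_of_real (coeff t 0) + z * complex_of_real (coeff t 1)"
      by (subst tf) (simp add: cp_pCons)
    hence "complex_of_real (coeff t 0) + z * complex_of_real (coeff t 1) = 0" using pt by simp
    hence e1: "coeff t 0 + Re z * coeff t 1 = 0" and e2: "Im z * coeff t 1 = 0"
      by (simp_all add: complex_eq_iff)
    have c1: "coeff t 1 = 0" using e2 False by simp
    have c0: "coeff t 0 = 0" using e1 c1 by simp
    have "t = 0" using tf c0 c1 by simp
    hence "q = d * (q div d)" using qe by (simp add: mult.commute)
    moreover have "(-2 * Re z)^2 < 4 * (Re z ^ 2 + Im z ^ 2)"
    proof -
      have "0 < Im z ^ 2" using False by simp
      thus ?thesis by (simp add: power2_eq_square algebra_simps)
    qed
    ultimately show ?thesis unfolding d_def by blast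
  qed
qed


definition smallinv :: "('a::real_vector \<Rightarrow> 'a) \<Rightarrow> 'a \<Rightarrow> bool" where
  "smallinv S w \<longleftrightarrow> (\<exists>z. S w = z *\<^sub>R w) \<or> (\<exists>b c. b^2 < 4*c \<and> S (S w) + b *\<^sub>R S w + c *\<^sub>R w = 0)"

lemma small_inv_aux:
  fixes S :: "'a::euclidean_space \<Rightarrow> 'a"
  assumes lS: "linear S" and U: "subspace U" and SU: "S ` U \<subseteq> U"
  shows "q \<noteq> 0 \<Longrightarrow> v \<in> U \<Longrightarrow> v \<noteq> 0 \<Longrightarrow> opoly q S v = 0 \<Longrightarrow> \<exists>w\<in>U. w \<noteq> 0 \<and> smallinv S w"
proof (induction "degree q" arbitrary: q v rule: less_induct)
  case less
  show ?case
  proof (cases "degree q = 0")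
    case True
    then obtain a where qa: "q = pCons a 0" by (rule degree_eq_zeroE)
    have "a \<noteq> 0" using less.prems(1) qa by simp
    moreover have "opoly q S v = a *\<^sub>R v" using qa lS linear_0[OF lS] by simp
    ultimately have "v = 0" using less.prems(4) by simp
    thus ?thesis using less.prems(3) by simp
  next
    case False
    then obtain d r where qdr: "q = d * r"
      and dform: "(\<exists>x. d = [:-x,1:]) \<or> (\<exists>b c. b^2 < 4*c \<and> d = [:c,b,1:])"
      using real_poly_factor by blast
    have dnz: "d \<noteq> 0" using dform by auto
    have degd: "degree d \<ge> 1" using dform by auto
    have rnz: "r \<noteq> 0" using qdr less.prems(1) by auto
    have degr: "degree r < degree q" using qdr degree_mult_eq[OF dnz rnz] degd by simp
    define w where "w = opoly r S v"
    have wU: "w \<in> U" unfolding w_def using opoly_in[OF lS U SU less.prems(2)] .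
    have dw: "opoly d S w = 0" using less.prems(4) unfolding qdr w_def by (simp add: opoly_mult lS)
    show ?thesis
    proof (cases "w = 0")
      case True
      then show ?thesis using less.hyps[OF degr rnz less.prems(2,3)] unfolding w_def by simp
    next
      case wnz: False
      have "smallinv S w"
        using dform
      proof
        assume "\<exists>x. d = [:-x,1:]"
        then obtain x where "d = [:-x,1:]" by blast
        hence "- x *\<^sub>R w + S w = 0" using dw lS by (simp add: linear_0[OF lS])
        hence "S w = x *\<^sub>R w" by (simp add: algebra_simps)
        thus "smallinv S w" unfolding smallinv_def by blast
      next
        assume "\<exists>b c. b^2 < 4*c \<and> d = [:c,b,1:]"
        then obtain b c where bc: "b^2 < 4*c" "d = [:c,b,1:]" by blast
        hence "c *\<^sub>R w + S (b *\<^sub>R w + S w) = 0" using dw lS by (simp add: linear_0[OF lS])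
        hence "S (S w) + b *\<^sub>R S w + c *\<^sub>R w = 0" using lS by (simp add: linear_add linear_scale algebra_simps)
        thus "smallinv S w" unfolding smallinv_def using bc by blast
      qed
      then show ?thesis using wU wnz by blast
    qed
  qed
qed

lemma dep_family:
  fixes f :: "nat \<Rightarrow> 'a::euclidean_space"
  assumes fU: "\<And>k. k \<le> d \<Longrightarrow> f k \<in> U" and dU: "dim U \<le> d"
  shows "\<exists>c. (\<exists>k\<le>d. c k \<noteq> 0) \<and> (\<Sum>k\<le>d. c k *\<^sub>R f k) = 0"
proof (cases "inj_on f {..d}")
  case True
  let ?B = "f ` {..d}"
  have cB: "card ?B = Suc d" using card_image[OF True] by simp
  have BU: "?B \<subseteq> U" using fU by auto
  have "\<not> independent ?B"
  proof
    assume "independent ?B"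
    hence "card ?B \<le> dim U" using independent_card_le_dim[OF BU] by blast
    thus False using cB dU by simp
  qed
  then obtain u where u: "\<exists>v\<in>?B. u v \<noteq> 0" "(\<Sum>v\<in>?B. u v *\<^sub>R v) = 0"
    using dependent_finite[of ?B] by auto
  have "(\<Sum>k\<le>d. u (f k) *\<^sub>R f k) = (\<Sum>v\<in>?B. u v *\<^sub>R v)"
    by (simp add: sum.reindex[OF True])
  moreover have "\<exists>k\<le>d. u (f k) \<noteq> 0" using u(1) by auto
  ultimately show ?thesis using u(2) by (intro exI[of _ "\<lambda>k. u (f k)"]) simp
next
  case False
  then obtain i j where ij: "i \<le> d" "j \<le> d" "i \<noteq> j" "f i = f j"
    unfolding inj_on_def by auto
  define c :: "nat \<Rightarrow> real" where "c k = (if k = i then 1 else if k = j then -1 else 0)" for k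
  have "(\<Sum>k\<le>d. c k *\<^sub>R f k) = (\<Sum>k\<le>d. (if k = i then f i else 0) - (if k = j then f j else 0))"
    by (rule sum.cong) (auto simp: c_def ij(3))
  also have "\<dots> = f i - f j" using ij by (simp add: sum_subtractf)
  also have "\<dots> = 0" using ij by simp
  finally show ?thesis using ij(1) unfolding c_def by (intro exI[of _ c]) (auto simp: c_def)
qed

lemma small_inv:
  fixes S :: "'a::euclidean_space \<Rightarrow> 'a"
  assumes lS: "linear S" and U: "subspace U" and SU: "S ` U \<subseteq> U" and nz: "U \<noteq> {0}"
  shows "\<exists>w\<in>U. w \<noteq> 0 \<and> smallinv S w"
proof -
  obtain v where v: "v \<in> U" "v \<noteq> 0" using nz U subspace_0 by blast
  let ?d = "dim U"
  have fU: "(S ^^ k) v \<in> U" for k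
    by (induction k) (use v SU in auto)
  obtain c where c: "\<exists>k\<le>?d. c k \<noteq> 0" "(\<Sum>k\<le>?d. c k *\<^sub>R (S ^^ k) v) = 0"
    using dep_family[of ?d "\<lambda>k. (S ^^ k) v" U] fU by auto
  define q where "q = (\<Sum>k\<le>?d. monom (c k) k)"
  have "opoly q S v = (\<Sum>k\<le>?d. c k *\<^sub>R (S ^^ k) v)"
    unfolding q_def by (simp add: opoly_sum opoly_monom lS)
  hence q0: "opoly q S v = 0" using c(2) by simp
  obtain k where k: "k \<le> ?d" "c k \<noteq> 0" using c(1) by blast
  have "coeff q k = c k" unfolding q_def using k(1) by (simp add: coeff_sum coeff_monom)
  hence "q \<noteq> 0" using k(2) by auto
  thus ?thesis using small_inv_aux[OF lS U SU _ v q0] by blast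
qed


definition indep2 :: "'a::real_vector \<Rightarrow> 'a \<Rightarrow> bool" where
  "indep2 u v \<longleftrightarrow> (\<forall>c d. c *\<^sub>R u + d *\<^sub>R v = 0 \<longrightarrow> c = 0 \<and> d = 0)"

definition pl :: "'a::real_vector \<Rightarrow> 'a \<Rightarrow> 'a set" where
  "pl u v = {a *\<^sub>R u + b *\<^sub>R v | a b. True}"

lemma subspace_pl: "subspace (pl u v)"
  unfolding subspace_def pl_def
proof (intro conjI allI ballI impI)
  show "0 \<in> {a *\<^sub>R u + b *\<^sub>R v |a b. True}" by (rule CollectI, rule exI[of _ 0], rule exI[of _ 0]) simp
next
  fix x y assume "x \<in> {a *\<^sub>R u + b *\<^sub>R v |a b. True}" "y \<in> {a *\<^sub>R u + b *\<^sub>R v |a b. True}"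
  then obtain a b a' b' where "x = a *\<^sub>R u + b *\<^sub>R v" "y = a' *\<^sub>R u + b' *\<^sub>R v" by blast
  hence "x + y = (a + a') *\<^sub>R u + (b + b') *\<^sub>R v" by (simp add: algebra_simps)
  thus "x + y \<in> {a *\<^sub>R u + b *\<^sub>R v |a b. True}" by blast
next
  fix c :: real and x assume "x \<in> {a *\<^sub>R u + b *\<^sub>R v |a b. True}"
  then obtain a b where "x = a *\<^sub>R u + b *\<^sub>R v" by blast
  hence "c *\<^sub>R x = (c * a) *\<^sub>R u + (c * b) *\<^sub>R v" by (simp add: algebra_simps)
  thus "c *\<^sub>R x \<in> {a *\<^sub>R u + b *\<^sub>R v |a b. True}" by blast
qed

lemma pl_sub: "subspace A \<Longrightarrow> u \<in> A \<Longrightarrow> v \<in> A \<Longrightarrow> pl u v \<subseteq> A"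
  unfolding pl_def by (auto simp: subspace_add subspace_scale)

lemma pl_mem1: "u \<in> pl u v"
proof -
  have "u = 1 *\<^sub>R u + 0 *\<^sub>R v" by simp
  thus ?thesis unfolding pl_def by blast
qed

lemma pl_mem2: "v \<in> pl u v"
proof -
  have "v = 0 *\<^sub>R u + 1 *\<^sub>R v" by simp
  thus ?thesis unfolding pl_def by blast
qed

lemma dim_pl: "dim (pl u v) \<le> 2"
proof -
  have "pl u v \<subseteq> span {u, v}"
  proof
    fix x assume "x \<in> pl u v"
    then obtain a b where x: "x = a *\<^sub>R u + b *\<^sub>R v" unfolding pl_def by blast
    have "u \<in> span {u, v}" "v \<in> span {u, v}" by (simp_all add: span_base)
    thus "x \<in> span {u, v}" unfolding x by (intro span_add span_scale) 
  qed
  hence "dim (pl u v) \<le> card {u, v}" by (rule dim_le_card) simp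
  also have "\<dots> \<le> 2" by (simp add: card_insert_le_m1)
  finally show ?thesis .
qed

lemma indep2_dim:
  fixes u v :: "'a::euclidean_space"
  assumes "indep2 u v" "u \<in> W" "v \<in> W"
  shows "2 \<le> dim W"
proof -
  have uv: "u \<noteq> v"
  proof
    assume "u = v"
    hence "1 *\<^sub>R u + (-1) *\<^sub>R v = 0" by simp
    thus False using assms(1) unfolding indep2_def by fastforce
  qed
  have v0: "v \<noteq> 0"
  proof
    assume "v = 0"
    hence "0 *\<^sub>R u + 1 *\<^sub>R v = 0" by simp
    thus False using assms(1) unfolding indep2_def by fastforce
  qed
  have "u \<notin> span {v}"
  proof
    assume "u \<in> span {v}"
    then obtain k where "u = k *\<^sub>R v" unfolding span_singleton by blast
    hence "1 *\<^sub>R u + (-k) *\<^sub>R v = 0" by simp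
    thus False using assms(1) unfolding indep2_def by fastforce
  qed
  moreover have "independent {v}" using v0 by simp
  ultimately have ind: "independent {u, v}" by (rule independent_insertI)
  have "card {u, v} \<le> dim W" by (rule independent_card_le_dim) (use assms ind in auto)
  thus ?thesis using uv by simp
qed

lemma dim1_mult:
  fixes k y :: "'a::euclidean_space"
  assumes "dim V \<le> 1" "k \<in> V" "k \<noteq> 0" "y \<in> V"
  shows "\<exists>t. y = t *\<^sub>R k"
proof (rule ccontr)
  assume ne: "\<nexists>t. y = t *\<^sub>R k"
  have "indep2 k y"
    unfolding indep2_def
  proof (intro allI impI)
    fix c d assume e: "c *\<^sub>R k + d *\<^sub>R y = 0"
    have d0: "d = 0"
    proof (rule ccontr)
      assume "d \<noteq> 0"
      note dnz = this
      have dy: "d *\<^sub>R y = - (c *\<^sub>R k)" using e by (simp add: eq_neg_iff_add_eq_0 add.commute)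
      have "y = (1/d) *\<^sub>R (d *\<^sub>R y)" using dnz by simp
      also have "\<dots> = (- c / d) *\<^sub>R k" unfolding dy by simp
      finally have "y = (- c / d) *\<^sub>R k" .
      thus False using ne by blast
    qed
    hence "c = 0" using e assms(3) by simp
    thus "c = 0 \<and> d = 0" using d0 by simp
  qed
  thus False using indep2_dim[of k y V] assms by simp
qed


definition nrm :: "('a::real_vector \<Rightarrow> 'a) \<Rightarrow> real \<Rightarrow> real \<Rightarrow> 'a \<Rightarrow> 'a" where
  "nrm T b c x = (1 / sqrt (c - b^2/4)) *\<^sub>R T x + (b / (2 * sqrt (c - b^2/4))) *\<^sub>R x"

lemma nrm_sq:
  fixes T :: "'a::real_vector \<Rightarrow> 'a"
  assumes lT: "linear T" and bc: "b^2 < 4*c" and q: "T (T x) + b *\<^sub>R T x + c *\<^sub>R x = 0"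
  shows "nrm T b c (nrm T b c x) = - x"
proof -
  define s where "s = sqrt (c - b^2/4)"
  have s2: "s^2 = c - b^2/4" unfolding s_def using bc by simp
  have spos: "s > 0" unfolding s_def using bc by simp
  define t where "t = 1 / s"
  define r where "r = b / (2 * s)"
  have nd: "nrm T b c y = t *\<^sub>R T y + r *\<^sub>R y" for y unfolding nrm_def t_def r_def s_def by simp
  have e1: "nrm T b c (nrm T b c x) = (t*t) *\<^sub>R T (T x) + (2*t*r) *\<^sub>R T x + (r*r) *\<^sub>R x"
    unfolding nd using lT by (simp add: linear_add linear_scale algebra_simps scaleR_add_left[symmetric])
  have TT: "T (T x) = - (b *\<^sub>R T x) - c *\<^sub>R x" using q by (simp add: algebra_simps eq_neg_iff_add_eq_0)
  have k1: "2*t*r - t*t*b = 0" unfolding t_def r_def using spos by (simp add: field_simps)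
  have k2: "r*r - t*t*c = -1" unfolding t_def r_def using spos s2 by (simp add: field_simps power2_eq_square)
  have "nrm T b c (nrm T b c x) = (2*t*r - t*t*b) *\<^sub>R T x + (r*r - t*t*c) *\<^sub>R x"
    unfolding e1 TT by (simp add: algebra_simps)
  thus ?thesis unfolding k1 k2 by simp
qed

lemma nrm_inv:
  assumes bc: "b^2 < 4*c"
  shows "T x = sqrt (c - b^2/4) *\<^sub>R nrm T b c x - (b/2) *\<^sub>R x"
proof -
  define s where "s = sqrt (c - b^2/4)"
  have spos: "s > 0" unfolding s_def using bc by simp
  have "s *\<^sub>R nrm T b c x = T x + (b/2) *\<^sub>R x"
    unfolding nrm_def s_def[symmetric] using spos by (simp add: algebra_simps)
  thus ?thesis unfolding s_def by simp
qed

lemma linear_nrm: "linear T \<Longrightarrow> linear (nrm T b c)"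
  unfolding nrm_def by (intro linearI) (simp_all add: linear_add linear_scale algebra_simps)

locale cfam =
  fixes S :: "'i \<Rightarrow> 'a::euclidean_space \<Rightarrow> 'a" and A :: "'a set"
  assumes subA: "subspace A" and linS: "\<And>i. linear (S i)" and SA: "\<And>i. S i ` A \<subseteq> A"
    and comm: "\<And>i j a. a \<in> A \<Longrightarrow> S i (S j a) = S j (S i a)"
begin

definition invs :: "'a set \<Rightarrow> bool" where
  "invs U \<longleftrightarrow> subspace U \<and> U \<subseteq> A \<and> (\<forall>i. S i ` U \<subseteq> U)"

lemma ker_invs:
  assumes U: "invs U" and lK: "linear K" and cK: "\<And>i x. x \<in> U \<Longrightarrow> K (S i x) = S i (K x)"
  shows "invs {x\<in>U. K x = 0}"
  unfolding invs_def
proof (intro conjI allI)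
  show "subspace {x \<in> U. K x = 0}" using U lK unfolding invs_def
    by (auto simp: subspace_def linear_add linear_scale linear_0)
  show "{x \<in> U. K x = 0} \<subseteq> A" using U unfolding invs_def by auto
  fix i show "S i ` {x \<in> U. K x = 0} \<subseteq> {x \<in> U. K x = 0}"
    using U cK linear_0[OF linS[of i]] unfolding invs_def by (auto simp: image_subset_iff)
qed

lemma min_exists:
  assumes "A \<noteq> {0}"
  shows "\<exists>U. invs U \<and> U \<noteq> {0} \<and> (\<forall>U'. invs U' \<longrightarrow> U' \<noteq> {0} \<longrightarrow> U' \<subseteq> U \<longrightarrow> U' = U)"
proof -
  have "invs A \<and> A \<noteq> {0}" using assms subA SA unfolding invs_def by auto
  then obtain U where U: "invs U \<and> U \<noteq> {0}" and m: "\<forall>U'. invs U' \<and> U' \<noteq> {0} \<longrightarrow> dim U \<le> dim U'"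
    using ex_has_least_nat[of "\<lambda>U. invs U \<and> U \<noteq> {0}" A dim] by blast
  have "\<forall>U'. invs U' \<longrightarrow> U' \<noteq> {0} \<longrightarrow> U' \<subseteq> U \<longrightarrow> U' = U"
  proof (intro allI impI)
    fix U' assume "invs U'" "U' \<noteq> {0}" "U' \<subseteq> U"
    thus "U' = U" using m U subspace_dim_equal[of U' U] unfolding invs_def by auto
  qed
  thus ?thesis using U by blast
qed

lemma S_U: "invs U \<Longrightarrow> x \<in> U \<Longrightarrow> S i x \<in> U"
  unfolding invs_def by auto

lemma each_i:
  assumes U: "invs U" "U \<noteq> {0}" and minU: "\<forall>U'. invs U' \<longrightarrow> U' \<noteq> {0} \<longrightarrow> U' \<subseteq> U \<longrightarrow> U' = U"
  shows "(\<exists>z. \<forall>x\<in>U. S i x = z *\<^sub>R x) \<or> (\<exists>b c. b^2 < 4*c \<and> (\<forall>x\<in>U. S i (S i x) + b *\<^sub>R S i x + c *\<^sub>R x = 0))"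
proof -
  have sU: "subspace U" and UA: "U \<subseteq> A" using U unfolding invs_def by auto
  have SiU: "S i ` U \<subseteq> U" using U unfolding invs_def by auto
  obtain w where w: "w \<in> U" "w \<noteq> 0" "smallinv (S i) w"
    using small_inv[OF linS sU SiU U(2)] by blast
  have lSi: "linear (S i)" by (rule linS)
  show ?thesis using w(3) unfolding smallinv_def
  proof
    assume "\<exists>z. S i w = z *\<^sub>R w"
    then obtain z where z: "S i w = z *\<^sub>R w" by blast
    define K where "K x = S i x - z *\<^sub>R x" for x
    have lK: "linear K" unfolding K_def using lSi by (intro linearI) (simp_all add: linear_add linear_scale algebra_simps)
    have cK: "K (S j x) = S j (K x)" if "x \<in> U" for j x
      unfolding K_def using comm[of x i j] that UA linS[of j] by (auto simp: linear_diff linear_scale)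
    have E: "invs {x\<in>U. K x = 0}" by (rule ker_invs[OF U(1) lK cK])
    have "w \<in> {x\<in>U. K x = 0}" using w z unfolding K_def by simp
    hence "{x\<in>U. K x = 0} \<noteq> {0}" using w(2) by auto
    hence "{x\<in>U. K x = 0} = U" using minU E by blast
    hence "\<forall>x\<in>U. S i x = z *\<^sub>R x" unfolding K_def by auto
    thus ?thesis by blast
  next
    assume "\<exists>b c. b^2 < 4*c \<and> S i (S i w) + b *\<^sub>R S i w + c *\<^sub>R w = 0"
    then obtain b c where bc: "b^2 < 4*c" "S i (S i w) + b *\<^sub>R S i w + c *\<^sub>R w = 0" by blast
    define K where "K x = S i (S i x) + b *\<^sub>R S i x + c *\<^sub>R x" for x
    have lK: "linear K" unfolding K_def using lSi by (intro linearI) (simp_all add: linear_add linear_scale algebra_simps)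
    have cK: "K (S j x) = S j (K x)" if "x \<in> U" for j x
    proof -
      have xA: "x \<in> A" using that UA by auto
      have "S i x \<in> A" using xA SA by auto
      hence "S i (S i (S j x)) = S j (S i (S i x))" using comm[of x i j] comm[of "S i x" i j] xA by simp
      thus ?thesis unfolding K_def using comm[of x i j] xA linS[of j] by (simp add: linear_add linear_scale)
    qed
    have E: "invs {x\<in>U. K x = 0}" by (rule ker_invs[OF U(1) lK cK])
    have "w \<in> {x\<in>U. K x = 0}" using w bc unfolding K_def by simp
    hence "{x\<in>U. K x = 0} \<noteq> {0}" using w(2) by auto
    hence "{x\<in>U. K x = 0} = U" using minU E by blast
    hence "\<forall>x\<in>U. S i (S i x) + b *\<^sub>R S i x + c *\<^sub>R x = 0" unfolding K_def by auto
    thus ?thesis using bc(1) by blast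
  qed
qed

end


lemma indep_J:
  assumes lJ: "linear J" and JJ: "J (J u) = - u" and u: "u \<noteq> 0"
  shows "indep2 u (J u)"
  unfolding indep2_def
proof (intro allI impI)
  fix c d assume e: "c *\<^sub>R u + d *\<^sub>R J u = 0"
  have "J (c *\<^sub>R u + d *\<^sub>R J u) = 0" using e linear_0[OF lJ] by simp
  hence e2: "c *\<^sub>R J u - d *\<^sub>R u = 0" using lJ JJ by (simp add: linear_add linear_scale)
  have "(c*c + d*d) *\<^sub>R u = c *\<^sub>R (c *\<^sub>R u + d *\<^sub>R J u) - d *\<^sub>R (c *\<^sub>R J u - d *\<^sub>R u)"
    by (simp add: algebra_simps)
  also have "\<dots> = 0" using e e2 by simp
  finally have "c*c + d*d = 0" using u by simp
  hence "c = 0" "d = 0" by (auto simp: add_nonneg_eq_0_iff)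
  thus "c = 0 \<and> d = 0" by simp
qed

lemma J_pl:
  assumes lJ: "linear J" and JJ: "J (J u) = - u" and x: "x \<in> pl u (J u)"
  shows "J x \<in> pl u (J u)"
proof -
  obtain a b where xe: "x = a *\<^sub>R u + b *\<^sub>R J u" using x unfolding pl_def by blast
  have "J x = (-b) *\<^sub>R u + a *\<^sub>R J u" unfolding xe using lJ JJ by (simp add: linear_add linear_scale)
  thus ?thesis unfolding pl_def by blast
qed

lemma no_cplx_odd:
  fixes J :: "'a::euclidean_space \<Rightarrow> 'a"
  assumes A: "subspace A" and lJ: "linear J" and JA: "\<And>x. x \<in> A \<Longrightarrow> J x \<in> A"
    and JJ: "\<And>x. x \<in> A \<Longrightarrow> J (J x) = - x" and d3: "dim A = 3"
  shows False
proof -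
  have "\<not> A \<subseteq> {0}" using d3 dim_eq_0[of A] by auto
  then obtain u where u: "u \<in> A" "u \<noteq> 0" by auto
  define W where "W = pl u (J u)"
  have WA: "W \<subseteq> A" unfolding W_def using pl_sub[OF A u(1) JA[OF u(1)]] .
  have "\<not> A \<subseteq> W"
  proof
    assume "A \<subseteq> W"
    hence "dim A \<le> dim W" by (rule dim_subset)
    thus False using dim_pl[of u "J u"] d3 unfolding W_def by simp
  qed
  then obtain u' where u': "u' \<in> A" "u' \<notin> W" by auto
  have u'0: "u' \<noteq> 0" using u' subspace_pl[of u "J u"] subspace_0 unfolding W_def by blast
  define W' where "W' = pl u' (J u')"
  have W'A: "W' \<subseteq> A" unfolding W'_def using pl_sub[OF A u'(1) JA[OF u'(1)]] .
  have int0: "W \<inter> W' \<subseteq> {0}"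
  proof
    fix x assume x: "x \<in> W \<inter> W'"
    then obtain a b where xe: "x = a *\<^sub>R u' + b *\<^sub>R J u'" unfolding W'_def pl_def by blast
    have Jx: "J x = a *\<^sub>R J u' - b *\<^sub>R u'" unfolding xe using lJ JJ[OF u'(1)] by (simp add: linear_add linear_scale)
    have JxW: "J x \<in> W" using J_pl[OF lJ JJ[OF u(1)]] x unfolding W_def by blast
    have "(a*a + b*b) *\<^sub>R u' = a *\<^sub>R (a *\<^sub>R u' + b *\<^sub>R J u') - b *\<^sub>R (a *\<^sub>R J u' - b *\<^sub>R u')"
      by (simp add: algebra_simps)
    hence comb: "(a*a + b*b) *\<^sub>R u' = a *\<^sub>R x - b *\<^sub>R J x"
      by (simp only: xe[symmetric] Jx[symmetric])
    have "a *\<^sub>R x - b *\<^sub>R J x \<in> W" using x JxW subspace_pl[of u "J u"] unfolding W_def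
      by (simp add: subspace_diff subspace_scale)
    hence "a*a + b*b = 0"
    proof (rule contrapos_pp)
      assume nz: "a*a + b*b \<noteq> 0"
      have k1: "(1/(a*a+b*b)) * (a*a+b*b) = 1" using nz by simp
      have "u' = ((1/(a*a+b*b)) * (a*a+b*b)) *\<^sub>R u'" unfolding k1 by simp
      hence "u' = (1/(a*a+b*b)) *\<^sub>R ((a*a + b*b) *\<^sub>R u')" by (simp only: scaleR_scaleR)
      also have "\<dots> = (1/(a*a+b*b)) *\<^sub>R (a *\<^sub>R x - b *\<^sub>R J x)" using comb by simp
      finally have "u' = (1/(a*a+b*b)) *\<^sub>R (a *\<^sub>R x - b *\<^sub>R J x)" .
      thus "a *\<^sub>R x - b *\<^sub>R J x \<notin> W" using u'(2) subspace_pl[of u "J u"] subspace_scale unfolding W_def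
        by metis
    qed
    hence "a = 0" "b = 0" by (auto simp: add_nonneg_eq_0_iff)
    thus "x \<in> {0}" using xe by simp
  qed
  have ds: "dim {x + y |x y. x \<in> W \<and> y \<in> W'} + dim (W \<inter> W') = dim W + dim W'"
    unfolding W_def W'_def by (rule dim_sums_Int[OF subspace_pl subspace_pl])
  have "dim (W \<inter> W') = 0" using int0 by simp
  moreover have "2 \<le> dim W" unfolding W_def
    using indep2_dim[OF indep_J[OF lJ JJ[OF u(1)] u(2)] pl_mem1 pl_mem2] .
  moreover have "2 \<le> dim W'" unfolding W'_def
    using indep2_dim[OF indep_J[OF lJ JJ[OF u'(1)] u'0] pl_mem1 pl_mem2] .
  moreover have "dim {x + y |x y. x \<in> W \<and> y \<in> W'} \<le> dim A"
    by (rule dim_subset) (use WA W'A A in \<open>auto intro!: subspace_add[OF A]\<close>)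
  ultimately show False using ds d3 by linarith
qed

context cfam
begin

lemma J_props:
  assumes U: "invs U" and bc: "b^2 < 4*c" and q: "\<forall>x\<in>U. S i0 (S i0 x) + b *\<^sub>R S i0 x + c *\<^sub>R x = 0"
  defines "J \<equiv> nrm (S i0) b c"
  shows "linear J" "\<And>x. x \<in> U \<Longrightarrow> J x \<in> U" "\<And>x. x \<in> U \<Longrightarrow> J (J x) = - x"
    "\<And>x j. x \<in> U \<Longrightarrow> J (S j x) = S j (J x)"
proof -
  show "linear J" unfolding J_def by (rule linear_nrm[OF linS])
  have sU: "subspace U" and UA: "U \<subseteq> A" using U unfolding invs_def by auto
  show "J x \<in> U" if "x \<in> U" for x
    unfolding J_def nrm_def using that S_U[OF U] sU by (simp add: subspace_add subspace_scale)
  show "J (J x) = - x" if "x \<in> U" for x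
    unfolding J_def by (rule nrm_sq[OF linS bc]) (use q that in blast)
  show "J (S j x) = S j (J x)" if "x \<in> U" for x j
    unfolding J_def nrm_def using comm[of x j i0] that UA linS[of j] by (auto simp: linear_add linear_scale)
qed

end


context cfam
begin

lemma coef_lemma:
  assumes U: "invs U" "U \<noteq> {0}" and minU: "\<forall>U'. invs U' \<longrightarrow> U' \<noteq> {0} \<longrightarrow> U' \<subseteq> U \<longrightarrow> U' = U"
    and bc: "b^2 < 4*c" and q: "\<forall>x\<in>U. S i0 (S i0 x) + b *\<^sub>R S i0 x + c *\<^sub>R x = 0"
  shows "\<exists>\<alpha> \<beta>. \<forall>x\<in>U. S j x = \<alpha> *\<^sub>R x + \<beta> *\<^sub>R nrm (S i0) b c x"
proof -
  define J where "J = nrm (S i0) b c"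
  note JP = J_props[OF U(1) bc q, folded J_def]
  have sU: "subspace U" and UA: "U \<subseteq> A" using U unfolding invs_def by auto
  show ?thesis
    using each_i[OF U minU, of j]
  proof
    assume "\<exists>z. \<forall>x\<in>U. S j x = z *\<^sub>R x"
    then obtain z where "\<forall>x\<in>U. S j x = z *\<^sub>R x" by blast
    hence "\<forall>x\<in>U. S j x = z *\<^sub>R x + 0 *\<^sub>R nrm (S i0) b c x" by simp
    thus ?thesis by blast
  next
    assume "\<exists>b' c'. b'^2 < 4*c' \<and> (\<forall>x\<in>U. S j (S j x) + b' *\<^sub>R S j x + c' *\<^sub>R x = 0)"
    then obtain b' c' where bc': "b'^2 < 4*c'" and q': "\<forall>x\<in>U. S j (S j x) + b' *\<^sub>R S j x + c' *\<^sub>R x = 0"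
      by blast
    define K where "K = nrm (S j) b' c'"
    note KP = J_props[OF U(1) bc' q', folded K_def]
    have KJ: "K (J x) = J (K x)" if "x \<in> U" for x
    proof -
      have "K (J x) = (1 / sqrt (c' - b'^2/4)) *\<^sub>R J (S j x) + (b' / (2 * sqrt (c' - b'^2/4))) *\<^sub>R J x"
        unfolding K_def nrm_def using JP(4)[OF that] by simp
      also have "\<dots> = J (K x)" unfolding K_def nrm_def using JP(1) by (simp add: linear_add linear_scale)
      finally show ?thesis .
    qed
    define D where "D x = K x - J x" for x
    have lD: "linear D" unfolding D_def using KP(1) JP(1) by (intro linearI) (simp_all add: linear_add linear_scale algebra_simps)
    have cD: "D (S l x) = S l (D x)" if "x \<in> U" for l x
      unfolding D_def using KP(4)[OF that] JP(4)[OF that] linS[of l] by (simp add: linear_diff)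
    have E: "invs {x\<in>U. D x = 0}" by (rule ker_invs[OF U(1) lD cD])
    define s' where "s' = sqrt (c' - b'^2/4)"
    have Sj: "S j x = s' *\<^sub>R K x - (b'/2) *\<^sub>R x" for x
      unfolding K_def s'_def by (rule nrm_inv[OF bc'])
    show ?thesis
    proof (cases "{x\<in>U. D x = 0} = {0}")
      case False
      hence "{x\<in>U. D x = 0} = U" using minU E by blast
      hence "\<forall>x\<in>U. K x = J x" unfolding D_def by auto
      hence "\<forall>x\<in>U. S j x = (- b'/2) *\<^sub>R x + s' *\<^sub>R nrm (S i0) b c x"
        using Sj unfolding J_def by (simp add: algebra_simps)
      thus ?thesis by blast
    next
      case True
      have "K x = - J x" if x: "x \<in> U" for x
      proof -
        define y where "y = K x + J x"
        have yU: "y \<in> U" unfolding y_def using KP(2)[OF x] JP(2)[OF x] sU by (simp add: subspace_add)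
        have "D y = K (K x) + K (J x) - J (K x) - J (J x)"
          unfolding D_def y_def using KP(1) JP(1) by (simp add: linear_add)
        also have "\<dots> = 0" using KP(3)[OF x] JP(3)[OF x] KJ[OF x] by simp
        finally have "y \<in> {x\<in>U. D x = 0}" using yU by simp
        hence "y = 0" using True by blast
        thus ?thesis unfolding y_def by (simp add: eq_neg_iff_add_eq_0)
      qed
      hence "\<forall>x\<in>U. S j x = (- b'/2) *\<^sub>R x + (- s') *\<^sub>R nrm (S i0) b c x"
      proof (intro ballI)
        fix x assume "x \<in> U"
        hence "K x = - J x" using \<open>\<And>x. x \<in> U \<Longrightarrow> K x = - J x\<close> by blast
        hence "S j x = s' *\<^sub>R (- J x) - (b'/2) *\<^sub>R x" using Sj[of x] by simp
        also have "\<dots> = (- b'/2) *\<^sub>R x + (- s') *\<^sub>R J x" by (simp add: algebra_simps)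
        finally show "S j x = (- b'/2) *\<^sub>R x + (- s') *\<^sub>R nrm (S i0) b c x" unfolding J_def .
      qed
      thus ?thesis by blast
    qed
  qed
qed

lemma main_alt:
  assumes "A \<noteq> {0}"
  shows "(\<exists>w\<in>A. w \<noteq> 0 \<and> (\<forall>i. \<exists>l. S i w = l *\<^sub>R w)) \<or>
         (\<exists>u\<in>A. \<exists>v\<in>A. indep2 u v \<and> (\<forall>i. \<exists>\<alpha> \<beta>. S i u = \<alpha> *\<^sub>R u + \<beta> *\<^sub>R v \<and> S i v = \<alpha> *\<^sub>R v - \<beta> *\<^sub>R u))"
proof -
  obtain U where U: "invs U" "U \<noteq> {0}" and minU: "\<forall>U'. invs U' \<longrightarrow> U' \<noteq> {0} \<longrightarrow> U' \<subseteq> U \<longrightarrow> U' = U"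
    using min_exists[OF assms] by blast
  have sU: "subspace U" and UA: "U \<subseteq> A" using U unfolding invs_def by auto
  obtain u where u: "u \<in> U" "u \<noteq> 0" using U(2) sU subspace_0 by blast
  show ?thesis
  proof (cases "\<forall>i. \<exists>z. \<forall>x\<in>U. S i x = z *\<^sub>R x")
    case True
    hence "\<forall>i. \<exists>l. S i u = l *\<^sub>R u" using u by blast
    thus ?thesis using u UA by blast
  next
    case False
    then obtain i0 where "\<not> (\<exists>z. \<forall>x\<in>U. S i0 x = z *\<^sub>R x)" by blast
    then obtain b c where bc: "b^2 < 4*c" and q: "\<forall>x\<in>U. S i0 (S i0 x) + b *\<^sub>R S i0 x + c *\<^sub>R x = 0"
      using each_i[OF U minU, of i0] by blast
    define J where "J = nrm (S i0) b c"
    note JP = J_props[OF U(1) bc q, folded J_def]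
    define v where "v = J u"
    have vU: "v \<in> U" unfolding v_def using JP(2)[OF u(1)] .
    have ind: "indep2 u v" unfolding v_def by (rule indep_J[OF JP(1) JP(3)[OF u(1)] u(2)])
    have "\<forall>i. \<exists>\<alpha> \<beta>. S i u = \<alpha> *\<^sub>R u + \<beta> *\<^sub>R v \<and> S i v = \<alpha> *\<^sub>R v - \<beta> *\<^sub>R u"
    proof
      fix j
      obtain \<alpha> \<beta> where ab: "\<forall>x\<in>U. S j x = \<alpha> *\<^sub>R x + \<beta> *\<^sub>R J x"
        using coef_lemma[OF U minU bc q, of j] unfolding J_def by blast
      have e1: "S j u = \<alpha> *\<^sub>R u + \<beta> *\<^sub>R v" using ab u(1) unfolding v_def by blast
      have "S j v = J (S j u)" unfolding v_def using JP(4)[OF u(1)] by simp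
      also have "\<dots> = \<alpha> *\<^sub>R v - \<beta> *\<^sub>R u" unfolding e1 v_def using JP(1) JP(3)[OF u(1)]
        by (simp add: linear_add linear_scale)
      finally show "\<exists>\<alpha> \<beta>. S j u = \<alpha> *\<^sub>R u + \<beta> *\<^sub>R v \<and> S j v = \<alpha> *\<^sub>R v - \<beta> *\<^sub>R u" using e1 by blast
    qed
    thus ?thesis using ind u(1) vU UA by blast
  qed
qed

lemma odd3:
  assumes d3: "dim A = 3"
  shows "\<exists>w\<in>A. w \<noteq> 0 \<and> (\<forall>i. \<exists>l. S i w = l *\<^sub>R w)"
proof -
  have An: "A \<noteq> {0}" using d3 by auto
  obtain U where U: "invs U" "U \<noteq> {0}" and minU: "\<forall>U'. invs U' \<longrightarrow> U' \<noteq> {0} \<longrightarrow> U' \<subseteq> U \<longrightarrow> U' = U"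
    using min_exists[OF An] by blast
  have sU: "subspace U" and UA: "U \<subseteq> A" using U unfolding invs_def by auto
  obtain u where u: "u \<in> U" "u \<noteq> 0" using U(2) sU subspace_0 by blast
  show ?thesis
  proof (cases "\<forall>i. \<exists>z. \<forall>x\<in>U. S i x = z *\<^sub>R x")
    case True
    hence "\<forall>i. \<exists>l. S i u = l *\<^sub>R u" using u by blast
    thus ?thesis using u UA by blast
  next
    case False
    then obtain i0 where "\<not> (\<exists>z. \<forall>x\<in>U. S i0 x = z *\<^sub>R x)" by blast
    then obtain b c where bc: "b^2 < 4*c" and q: "\<forall>x\<in>U. S i0 (S i0 x) + b *\<^sub>R S i0 x + c *\<^sub>R x = 0"
      using each_i[OF U minU, of i0] by blast
    define J where "J = nrm (S i0) b c"
    note JP = J_props[OF U(1) bc q, folded J_def]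
    define D where "D x = S i0 (S i0 x) + b *\<^sub>R S i0 x + c *\<^sub>R x" for x
    have lD: "linear D" unfolding D_def using linS[of i0]
      by (intro linearI) (simp_all add: linear_add linear_scale algebra_simps)
    have cD: "D (S l x) = S l (D x)" if xA: "x \<in> A" for l x
    proof -
      have "S i0 x \<in> A" using xA SA by auto
      hence "S i0 (S i0 (S l x)) = S l (S i0 (S i0 x))" using comm[of x i0 l] comm[of "S i0 x" i0 l] xA by simp
      thus ?thesis unfolding D_def using comm[of x i0 l] xA linS[of l] by (simp add: linear_add linear_scale)
    qed
    show ?thesis
    proof (cases "\<forall>x\<in>A. D x = 0")
      case True
      define J' where "J' = nrm (S i0) b c"
      have "False"
      proof (rule no_cplx_odd[OF subA _ _ _ d3])
        show "linear J'" unfolding J'_def by (rule linear_nrm[OF linS])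
        show "J' x \<in> A" if "x \<in> A" for x
        proof -
          have "S i0 x \<in> A" using that SA by auto
          thus ?thesis unfolding J'_def nrm_def using that subA by (simp add: subspace_add subspace_scale)
        qed
        show "J' (J' x) = - x" if "x \<in> A" for x
          unfolding J'_def by (rule nrm_sq[OF linS bc]) (use True that in \<open>simp add: D_def\<close>)
      qed
      thus ?thesis by simp
    next
      case False
      then obtain x0 where x0: "x0 \<in> A" "D x0 \<noteq> 0" by blast
      let ?V = "D ` A"
      have rn: "dim A = dim {x\<in>A. D x = 0} + dim ?V" by (rule rank_nullity_sub[OF lD subA])
      have "U \<subseteq> {x\<in>A. D x = 0}" using q UA unfolding D_def by auto
      hence "2 \<le> dim {x\<in>A. D x = 0}"
        using indep2_dim[OF indep_J[OF JP(1) JP(3)[OF u(1)] u(2)], of "{x\<in>A. D x = 0}"] u(1) JP(2)[OF u(1)]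
        by blast
      hence dV: "dim ?V \<le> 1" using rn d3 by linarith
      have kV: "D x0 \<in> ?V" using x0 by auto
      have kA: "D x0 \<in> A" using x0 SA subA unfolding D_def by (auto simp: subspace_add subspace_scale image_subset_iff)
      have "\<forall>i. \<exists>l. S i (D x0) = l *\<^sub>R D x0"
      proof
        fix i
        have "S i (D x0) = D (S i x0)" using cD[OF x0(1)] by simp
        moreover have "S i x0 \<in> A" using x0 SA by auto
        ultimately have "S i (D x0) \<in> ?V" by auto
        thus "\<exists>l. S i (D x0) = l *\<^sub>R D x0" using dim1_mult[OF dV kV x0(2)] by blast
      qed
      thus ?thesis using kA x0(2) by blast
    qed
  qed
qed

end


definition gF :: "(real^'n \<Rightarrow> real^'n \<Rightarrow> real^'n) \<Rightarrow> (real^'n \<Rightarrow> real) \<Rightarrow> real^'n \<Rightarrow> real^'n" where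
  "gF br F x = (\<chi> i. F (br (axis i 1) x))"

lemma basis_axis: "b \<in> (Basis :: (real^'n) set) \<Longrightarrow> \<exists>i. b = axis i 1"
  by (auto simp: Basis_vec_def)

context
  fixes br :: "real^'n \<Rightarrow> real^'n \<Rightarrow> real^'n" and F :: "real^'n \<Rightarrow> real"
  assumes bl: "bilinear br" and lF: "linear F"
begin

lemma lin_r: "linear (br x)" using bl unfolding bilinear_def by simp
lemma lin_l: "linear (\<lambda>x. br x y)" using bl unfolding bilinear_def by simp

lemma linear_gF: "linear (gF br F)"
  unfolding gF_def
  by (intro linearI) (simp_all add: vec_eq_iff linear_add[OF lin_r] linear_scale[OF lin_r]
      linear_add[OF lF] linear_scale[OF lF])

lemma gF_inner: "gF br F x \<bullet> y = F (br y x)"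
proof -
  have l1: "linear (\<lambda>y. gF br F x \<bullet> y)" by (rule bounded_linear.linear[OF bounded_linear_inner_right])
  have l2: "linear (\<lambda>y. F (br y x))"
    by (intro linearI) (simp_all add: linear_add[OF lin_l] linear_scale[OF lin_l] linear_add[OF lF] linear_scale[OF lF])
  have "(\<lambda>y. gF br F x \<bullet> y) = (\<lambda>y. F (br y x))"
  proof (rule linear_eq_stdbasis[OF l1 l2])
    fix b :: "real^'n" assume "b \<in> Basis"
    then obtain i where b: "b = axis i 1" using basis_axis by blast
    show "gF br F x \<bullet> b = F (br b x)" unfolding b gF_def by (simp add: inner_axis)
  qed
  thus ?thesis by metis
qed

lemma orbit_dim: "coadj_orbit_dim br F = dim (range (gF br F))"
proof -
  have "(\<chi> i j. F (br (axis i 1) (axis j 1))) = matrix (gF br F)"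
    unfolding matrix_def gF_def by simp
  hence "coadj_orbit_dim br F = rank (matrix (gF br F))" unfolding coadj_orbit_dim_def by simp
  also have "\<dots> = dim (range (\<lambda>x. matrix (gF br F) *v x))" by (rule rank_dim_range)
  also have "(\<lambda>x. matrix (gF br F) *v x) = gF br F" by (rule matrix_vector_mul(2)[OF linear_gF])
  finally show ?thesis .
qed

lemma ker_gF: "gF br F x = 0 \<longleftrightarrow> (\<forall>y. F (br y x) = 0)"
proof
  assume "gF br F x = 0" thus "\<forall>y. F (br y x) = 0" using gF_inner by (metis inner_zero_left)
next
  assume "\<forall>y. F (br y x) = 0"
  hence "gF br F x \<bullet> gF br F x = 0" using gF_inner by simp
  thus "gF br F x = 0" by simp
qed

lemma dim_ker_gF: "dim {x. gF br F x = 0} + coadj_orbit_dim br F = CARD('n)"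
proof -
  have "dim (UNIV :: (real^'n) set) = dim {x\<in>UNIV. gF br F x = 0} + dim (gF br F ` UNIV)"
    by (rule rank_nullity_sub[OF linear_gF subspace_UNIV])
  thus ?thesis unfolding orbit_dim by simp
qed

lemma count:
  assumes P: "subspace P" and iso: "\<And>x y. x \<in> P \<Longrightarrow> y \<in> P \<Longrightarrow> F (br y x) = 0"
    and k2: "dim {x. gF br F x = 0} \<le> 2"
  shows "2 * dim P \<le> CARD('n) + 2"
proof -
  have rn: "dim P = dim {x\<in>P. gF br F x = 0} + dim (gF br F ` P)"
    by (rule rank_nullity_sub[OF linear_gF P])
  have "dim {x\<in>P. gF br F x = 0} \<le> dim {x. gF br F x = 0}" by (rule dim_subset) auto
  hence d1: "dim {x\<in>P. gF br F x = 0} \<le> 2" using k2 by simp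
  let ?O = "{y \<in> UNIV. \<forall>x\<in>P. orthogonal x y}"
  have "gF br F ` P \<subseteq> ?O"
  proof
    fix z assume "z \<in> gF br F ` P"
    then obtain x where x: "x \<in> P" "z = gF br F x" by blast
    have "\<forall>p\<in>P. orthogonal p z"
    proof
      fix p assume p: "p \<in> P"
      have "z \<bullet> p = 0" unfolding x(2) gF_inner using iso[OF x(1) p] .
      thus "orthogonal p z" unfolding orthogonal_def by (simp add: inner_commute)
    qed
    thus "z \<in> ?O" by simp
  qed
  hence "dim (gF br F ` P) \<le> dim ?O" by (rule dim_subset)
  moreover have "dim ?O + dim P = dim (UNIV :: (real^'n) set)"
    by (rule dim_subspace_orthogonal_to_vectors[OF P subspace_UNIV]) simp
  ultimately show ?thesis using rn d1 by simp
qed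

end


lemma subspace_ker: "linear f \<Longrightarrow> subspace {x. f x = 0}"
  by (auto simp: subspace_def linear_add linear_scale linear_0)

locale lie1 =
  fixes br :: "real^'n \<Rightarrow> real^'n \<Rightarrow> real^'n"
  assumes os: "one_step_solvable br" and md: "MD_algebra (CARD('n) - 2) br"
    and n6: "CARD('n) \<ge> 6" and m3: "dim (derived br UNIV) \<ge> 3"
begin

lemma lie: "lie_algebra br" using os unfolding one_step_solvable_def by simp
lemma bl: "bilinear br" using lie unfolding lie_algebra_def by simp
lemma alt: "br x x = 0" using lie unfolding lie_algebra_def by simp
lemma jac: "br x (br y z) + br y (br z x) + br z (br x y) = 0" using lie unfolding lie_algebra_def by blast
lemma subA: "subspace (derived br UNIV)" unfolding derived_def by (rule subspace_span)
lemma brA: "br x y \<in> derived br UNIV" unfolding derived_def by (rule span_base) blast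
lemma ab: "a \<in> derived br UNIV \<Longrightarrow> b \<in> derived br UNIV \<Longrightarrow> br a b = 0"
  using os unfolding one_step_solvable_def by blast
lemma Anz: "derived br UNIV \<noteq> {0}" using os unfolding one_step_solvable_def by blast

lemma lr: "linear (br x)" using bl unfolding bilinear_def by simp
lemma ll: "linear (\<lambda>x. br x y)" using bl unfolding bilinear_def by simp

lemma skew: "br y x = - br x y"
proof -
  have e: "br (x + y) (x + y) = br x x + br x y + br y x + br y y"
    by (simp add: bilinear_ladd[OF bl] bilinear_radd[OF bl] algebra_simps)
  have "br x y + br y x = 0" using e alt[of "x+y"] alt[of x] alt[of y] by simp
  thus ?thesis by (simp add: eq_neg_iff_add_eq_0 add.commute)
qed

lemma commA: "a \<in> derived br UNIV \<Longrightarrow> br x (br y a) = br y (br x a)"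
proof -
  assume a: "a \<in> derived br UNIV"
  have "br a (br x y) = 0" using ab[OF a brA] .
  moreover have "br y (br a x) = - br y (br x a)" using skew[of x a] linear_neg[OF lr] by simp
  ultimately show ?thesis using jac[of x y a] by simp
qed

lemma mdF: "linear F \<Longrightarrow> (\<exists>x\<in>derived br UNIV. F x \<noteq> 0) \<Longrightarrow> coadj_orbit_dim br F = CARD('n) - 2"
  using md unfolding MD_algebra_def by blast

definition pA :: "real^'n \<Rightarrow> real^'n" where
  "pA y = (SOME p. p \<in> derived br UNIV \<and> (\<forall>a\<in>derived br UNIV. (y - p) \<bullet> a = 0))"

lemma pA_ex: "\<exists>p. p \<in> derived br UNIV \<and> (\<forall>a\<in>derived br UNIV. (y - p) \<bullet> a = 0)"
proof -
  obtain p z where p: "p \<in> span (derived br UNIV)" and z: "\<And>w. w \<in> span (derived br UNIV) \<Longrightarrow> orthogonal z w"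
    and e: "y = p + z"
    by (rule orthogonal_subspace_decomp_exists[of "derived br UNIV" y], rule that, assumption+)
  have sp: "span (derived br UNIV) = derived br UNIV" by (rule span_eq_iff[THEN iffD2, OF subA])
  have "p \<in> derived br UNIV" using p unfolding sp .
  moreover have "\<forall>a\<in>derived br UNIV. (y - p) \<bullet> a = 0"
    using z unfolding sp e orthogonal_def by simp
  ultimately show ?thesis by blast
qed

lemma pA: "pA y \<in> derived br UNIV" "a \<in> derived br UNIV \<Longrightarrow> (y - pA y) \<bullet> a = 0"
  using someI_ex[OF pA_ex[of y]] unfolding pA_def[symmetric] by blast+

lemma uniqA:
  assumes "p \<in> derived br UNIV" "q \<in> derived br UNIV" "\<And>a. a \<in> derived br UNIV \<Longrightarrow> p \<bullet> a = q \<bullet> a"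
  shows "p = q"
proof -
  have d: "p - q \<in> derived br UNIV" using assms(1,2) subA by (simp add: subspace_diff)
  have "(p - q) \<bullet> (p - q) = p \<bullet> (p - q) - q \<bullet> (p - q)" by (simp add: inner_diff_left)
  also have "\<dots> = 0" using assms(3)[OF d] by simp
  finally show ?thesis by simp
qed

definition Ts :: "real^'n \<Rightarrow> real^'n \<Rightarrow> real^'n" where
  "Ts x w = pA (adjoint (br x) w)"

lemma Ts_A: "Ts x w \<in> derived br UNIV" unfolding Ts_def by (rule pA(1))

lemma Ts_inner: "a \<in> derived br UNIV \<Longrightarrow> Ts x w \<bullet> a = w \<bullet> br x a"
proof -
  assume a: "a \<in> derived br UNIV"
  have "(adjoint (br x) w - Ts x w) \<bullet> a = 0" unfolding Ts_def by (rule pA(2)[OF a])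
  hence "Ts x w \<bullet> a = adjoint (br x) w \<bullet> a" by (simp add: inner_diff_left)
  also have "\<dots> = w \<bullet> br x a" by (rule adjoint_clauses(2)[OF lr])
  finally show ?thesis .
qed

lemma Ts_char: "g \<in> derived br UNIV \<Longrightarrow> (\<And>a. a \<in> derived br UNIV \<Longrightarrow> g \<bullet> a = w \<bullet> br x a) \<Longrightarrow> Ts x w = g"
  by (rule uniqA[OF Ts_A]) (simp_all add: Ts_inner)

lemma lin_Ts: "linear (Ts x)"
proof (rule linearI)
  fix w1 w2 show "Ts x (w1 + w2) = Ts x w1 + Ts x w2"
    by (rule Ts_char) (simp_all add: subspace_add[OF subA Ts_A Ts_A] inner_add_left Ts_inner)
next
  fix c :: real and w show "Ts x (c *\<^sub>R w) = c *\<^sub>R Ts x w"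
    by (rule Ts_char) (simp_all add: subspace_scale[OF subA Ts_A] Ts_inner)
qed

lemma lin_Ts2: "linear (\<lambda>x. Ts x w)"
proof (rule linearI)
  fix x1 x2 show "Ts (x1 + x2) w = Ts x1 w + Ts x2 w"
    by (rule Ts_char) (simp_all add: subspace_add[OF subA Ts_A Ts_A] inner_add_left Ts_inner
        bilinear_ladd[OF bl] inner_add_right)
next
  fix c :: real and x show "Ts (c *\<^sub>R x) w = c *\<^sub>R Ts x w"
    by (rule Ts_char) (simp_all add: subspace_scale[OF subA Ts_A] Ts_inner bilinear_lmul[OF bl])
qed

lemma Ts_comm: "Ts i (Ts j w) = Ts j (Ts i w)"
proof (rule uniqA[OF Ts_A Ts_A])
  fix a assume a: "a \<in> derived br UNIV"
  show "Ts i (Ts j w) \<bullet> a = Ts j (Ts i w) \<bullet> a"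
    using Ts_inner[OF a] Ts_inner[OF brA] commA[OF a] by simp
qed

sublocale cf: cfam Ts "derived br UNIV"
  by (rule cfam.intro[OF subA lin_Ts]) (auto simp: Ts_A Ts_comm)

lemma jacF: "w \<bullet> br x0 (br y x) = - (w \<bullet> br y (br x x0)) - (w \<bullet> br x (br x0 y))"
proof -
  have "br x0 (br y x) = - br y (br x x0) - br x (br x0 y)" using jac[of x0 y x]
    by (simp add: algebra_simps eq_neg_iff_add_eq_0)
  thus ?thesis by (simp add: inner_diff_right)
qed

lemma lin_wF: "linear (\<lambda>z. w \<bullet> z)" by (rule bounded_linear.linear[OF bounded_linear_inner_right])

lemma ker2:
  assumes w: "w \<in> derived br UNIV" "w \<noteq> 0"
  shows "dim {x. gF br (\<lambda>z. w \<bullet> z) x = 0} = 2"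
proof -
  have "coadj_orbit_dim br (\<lambda>z. w \<bullet> z) = CARD('n) - 2"
    using mdF[OF lin_wF] w by (metis inner_eq_zero_iff)
  thus ?thesis using dim_ker_gF[OF bl lin_wF, of w] n6 by simp
qed

lemma notAker:
  assumes w: "w \<in> derived br UNIV" "w \<noteq> 0"
  shows "\<exists>x0. Ts x0 w \<noteq> 0"
proof (rule ccontr)
  assume "\<nexists>x0. Ts x0 w \<noteq> 0"
  hence T0: "Ts x w = 0" for x by blast
  have "derived br UNIV \<subseteq> {x. gF br (\<lambda>z. w \<bullet> z) x = 0}"
  proof
    fix a assume a: "a \<in> derived br UNIV"
    have "\<forall>y. w \<bullet> br y a = 0" using Ts_inner[OF a] T0 by (metis inner_zero_left)
    thus "a \<in> {x. gF br (\<lambda>z. w \<bullet> z) x = 0}" using ker_gF[OF bl lin_wF] by simp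
  qed
  hence "dim (derived br UNIV) \<le> dim {x. gF br (\<lambda>z. w \<bullet> z) x = 0}" by (rule dim_subset)
  hence "dim (derived br UNIV) \<le> 2" using ker2[OF w] by simp
  thus False using m3 by simp
qed

lemma noR: "\<not> (\<exists>w\<in>derived br UNIV. w \<noteq> 0 \<and> (\<forall>i. \<exists>l. Ts i w = l *\<^sub>R w))"
proof
  assume "\<exists>w\<in>derived br UNIV. w \<noteq> 0 \<and> (\<forall>i. \<exists>l. Ts i w = l *\<^sub>R w)"
  then obtain w where w: "w \<in> derived br UNIV" "w \<noteq> 0" and ev: "\<And>i. \<exists>l. Ts i w = l *\<^sub>R w" by blast
  define P where "P = {x. Ts x w = 0}"
  have sP: "subspace P" unfolding P_def by (rule subspace_ker[OF lin_Ts2])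
  have rn: "dim (UNIV :: (real^'n) set) = dim {x\<in>UNIV. Ts x w = 0} + dim (range (\<lambda>x. Ts x w))"
    by (rule rank_nullity_sub[OF lin_Ts2 subspace_UNIV])
  have "range (\<lambda>x. Ts x w) \<subseteq> span {w}"
  proof
    fix z assume "z \<in> range (\<lambda>x. Ts x w)"
    then obtain x where zx: "z = Ts x w" by blast
    obtain l where "Ts x w = l *\<^sub>R w" using ev by blast
    hence "z = l *\<^sub>R w" using zx by simp
    thus "z \<in> span {w}" by (simp add: span_base span_scale)
  qed
  hence "dim (range (\<lambda>x. Ts x w)) \<le> card {w}" by (rule dim_le_card) simp
  hence dP: "CARD('n) \<le> dim P + 1" using rn unfolding P_def by simp
  obtain x0 where x0: "Ts x0 w \<noteq> 0" using notAker[OF w] by blast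
  obtain l where l: "Ts x0 w = l *\<^sub>R w" using ev by blast
  have l0: "l \<noteq> 0" using x0 l by (cases "l = 0") simp_all
  have iso: "w \<bullet> br y x = 0" if x: "x \<in> P" and y: "y \<in> P" for x y
  proof -
    have xP: "Ts x w = 0" using x unfolding P_def by simp
    have yP: "Ts y w = 0" using y unfolding P_def by simp
    have t1: "Ts x0 w \<bullet> br y x = w \<bullet> br x0 (br y x)" by (rule Ts_inner[OF brA])
    have t2: "Ts y w \<bullet> br x x0 = w \<bullet> br y (br x x0)" by (rule Ts_inner[OF brA])
    have t3: "Ts x w \<bullet> br x0 y = w \<bullet> br x (br x0 y)" by (rule Ts_inner[OF brA])
    have "w \<bullet> br x0 (br y x) = l * (w \<bullet> br y x)"
      using t1 l by simp
    moreover have "w \<bullet> br x0 (br y x) = 0"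
      using jacF[of w x0 y x] t2 t3 xP yP by simp
    ultimately show ?thesis using l0 by simp
  qed
  have "2 * dim P \<le> CARD('n) + 2"
    by (rule count[OF bl lin_wF sP]) (use iso ker2[OF w] in auto)
  thus False using dP n6 by linarith
qed

lemma caseC:
  assumes u: "u \<in> derived br UNIV" and v: "v \<in> derived br UNIV" and ind: "indep2 u v"
    and rot: "\<And>i. \<exists>\<alpha> \<beta>. Ts i u = \<alpha> *\<^sub>R u + \<beta> *\<^sub>R v \<and> Ts i v = \<alpha> *\<^sub>R v - \<beta> *\<^sub>R u"
  shows "CARD('n) \<le> 6 \<and> dim (derived br UNIV) \<le> 4"
proof -
  have u0: "u \<noteq> 0"
  proof
    assume "u = 0" hence "1 *\<^sub>R u + 0 *\<^sub>R v = 0" by simp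
    thus False using ind unfolding indep2_def by fastforce
  qed
  define P where "P = {x. Ts x u = 0}"
  have sP: "subspace P" unfolding P_def by (rule subspace_ker[OF lin_Ts2])
  have rn: "dim (UNIV :: (real^'n) set) = dim {x\<in>UNIV. Ts x u = 0} + dim (range (\<lambda>x. Ts x u))"
    by (rule rank_nullity_sub[OF lin_Ts2 subspace_UNIV])
  have "range (\<lambda>x. Ts x u) \<subseteq> pl u v"
  proof
    fix z assume "z \<in> range (\<lambda>x. Ts x u)"
    then obtain x where zx: "z = Ts x u" by blast
    obtain \<alpha> \<beta> where "Ts x u = \<alpha> *\<^sub>R u + \<beta> *\<^sub>R v" using rot by blast
    thus "z \<in> pl u v" unfolding zx pl_def by blast
  qed
  hence "dim (range (\<lambda>x. Ts x u)) \<le> dim (pl u v)" by (rule dim_subset)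
  hence "dim (range (\<lambda>x. Ts x u)) \<le> 2" using dim_pl[of u v] by linarith
  hence dP: "CARD('n) \<le> dim P + 2" using rn unfolding P_def by simp
  have Pv: "Ts x v = 0" if "x \<in> P" for x
  proof -
    obtain \<alpha> \<beta> where ab: "Ts x u = \<alpha> *\<^sub>R u + \<beta> *\<^sub>R v" "Ts x v = \<alpha> *\<^sub>R v - \<beta> *\<^sub>R u" using rot by blast
    have "\<alpha> *\<^sub>R u + \<beta> *\<^sub>R v = 0" using ab(1) that unfolding P_def by simp
    hence "\<alpha> = 0 \<and> \<beta> = 0" using ind unfolding indep2_def by blast
    thus ?thesis using ab(2) by simp
  qed
  obtain x0 where x0: "Ts x0 u \<noteq> 0" using notAker[OF u u0] by blast
  obtain \<alpha> \<beta> where ab: "Ts x0 u = \<alpha> *\<^sub>R u + \<beta> *\<^sub>R v" "Ts x0 v = \<alpha> *\<^sub>R v - \<beta> *\<^sub>R u" using rot by blast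
  have abnz: "\<alpha>*\<alpha> + \<beta>*\<beta> \<noteq> 0"
  proof
    assume "\<alpha>*\<alpha> + \<beta>*\<beta> = 0"
    hence "\<alpha> = 0" "\<beta> = 0" by (simp_all add: add_nonneg_eq_0_iff)
    thus False using x0 ab(1) by simp
  qed
  have iso: "u \<bullet> br y x = 0" if x: "x \<in> P" and y: "y \<in> P" for x y
  proof -
    let ?c = "br y x"
    have xP: "Ts x u = 0" using x unfolding P_def by simp
    have yP: "Ts y u = 0" using y unfolding P_def by simp
    have t1: "Ts x0 u \<bullet> br y x = u \<bullet> br x0 (br y x)" by (rule Ts_inner[OF brA])
    have t1': "Ts x0 v \<bullet> br y x = v \<bullet> br x0 (br y x)" by (rule Ts_inner[OF brA])
    have t2: "Ts y u \<bullet> br x x0 = u \<bullet> br y (br x x0)" by (rule Ts_inner[OF brA])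
    have t3: "Ts x u \<bullet> br x0 y = u \<bullet> br x (br x0 y)" by (rule Ts_inner[OF brA])
    have t2': "Ts y v \<bullet> br x x0 = v \<bullet> br y (br x x0)" by (rule Ts_inner[OF brA])
    have t3': "Ts x v \<bullet> br x0 y = v \<bullet> br x (br x0 y)" by (rule Ts_inner[OF brA])
    have e1: "u \<bullet> br x0 ?c = \<alpha> * (u \<bullet> ?c) + \<beta> * (v \<bullet> ?c)"
      using t1 ab(1) by (simp add: inner_add_left)
    have e2: "v \<bullet> br x0 ?c = \<alpha> * (v \<bullet> ?c) - \<beta> * (u \<bullet> ?c)"
      using t1' ab(2) by (simp add: inner_diff_left)
    have z1: "u \<bullet> br x0 ?c = 0"
      using jacF[of u x0 y x] t2 t3 xP yP by simp
    have z2: "v \<bullet> br x0 ?c = 0"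
      using jacF[of v x0 y x] t2' t3' Pv[OF x] Pv[OF y] by simp
    have "(\<alpha>*\<alpha> + \<beta>*\<beta>) * (u \<bullet> ?c) = \<alpha> * (u \<bullet> br x0 ?c) - \<beta> * (v \<bullet> br x0 ?c)"
      unfolding e1 e2 by (simp add: algebra_simps)
    also have "\<dots> = 0" using z1 z2 by simp
    finally have "(\<alpha>*\<alpha> + \<beta>*\<beta>) * (u \<bullet> ?c) = 0" .
    thus ?thesis using abnz mult_eq_0_iff by blast
  qed
  have k2: "dim {x. gF br (\<lambda>z. u \<bullet> z) x = 0} = 2" by (rule ker2[OF u u0])
  have "2 * dim P \<le> CARD('n) + 2"
    by (rule count[OF bl lin_wF sP]) (use iso k2 in auto)
  hence n: "CARD('n) \<le> 6" using dP by linarith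
  let ?N = "{y \<in> derived br UNIV. \<forall>x\<in>pl u v. orthogonal x y}"
  have dN: "dim ?N + dim (pl u v) = dim (derived br UNIV)"
    by (rule dim_subspace_orthogonal_to_vectors[OF subspace_pl subA pl_sub[OF subA u v]])
  have "?N \<subseteq> {x. gF br (\<lambda>z. u \<bullet> z) x = 0}"
  proof
    fix a assume a: "a \<in> ?N"
    hence aA: "a \<in> derived br UNIV" and oa: "\<forall>x\<in>pl u v. orthogonal x a" by simp_all
    have ua: "u \<bullet> a = 0" using oa pl_mem1[of u v] unfolding orthogonal_def by blast
    have va: "v \<bullet> a = 0" using oa pl_mem2[of v u] unfolding orthogonal_def by blast
    have "\<forall>y. u \<bullet> br y a = 0"
    proof
      fix y
      obtain \<alpha>' \<beta>' where "Ts y u = \<alpha>' *\<^sub>R u + \<beta>' *\<^sub>R v" using rot by blast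
      thus "u \<bullet> br y a = 0" using Ts_inner[OF aA, of y u] ua va by (simp add: inner_add_left)
    qed
    thus "a \<in> {x. gF br (\<lambda>z. u \<bullet> z) x = 0}" using ker_gF[OF bl lin_wF] by simp
  qed
  hence "dim ?N \<le> dim {x. gF br (\<lambda>z. u \<bullet> z) x = 0}" by (rule dim_subset)
  hence "dim ?N \<le> 2" using k2 by simp
  hence "dim (derived br UNIV) \<le> 4" using dN dim_pl[of u v] by linarith
  thus ?thesis using n by simp
qed

lemma final: "CARD('n) = 6 \<and> dim (derived br UNIV) = 4"
proof -
  have alts: "(\<exists>w\<in>derived br UNIV. w \<noteq> 0 \<and> (\<forall>i. \<exists>l. Ts i w = l *\<^sub>R w)) \<or>
         (\<exists>u\<in>derived br UNIV. \<exists>v\<in>derived br UNIV. indep2 u v \<and>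
            (\<forall>i. \<exists>\<alpha> \<beta>. Ts i u = \<alpha> *\<^sub>R u + \<beta> *\<^sub>R v \<and> Ts i v = \<alpha> *\<^sub>R v - \<beta> *\<^sub>R u))"
    by (rule cf.main_alt[OF Anz])
  then obtain u v where u: "u \<in> derived br UNIV" and v: "v \<in> derived br UNIV" and ind: "indep2 u v"
    and rot: "\<And>i. \<exists>\<alpha> \<beta>. Ts i u = \<alpha> *\<^sub>R u + \<beta> *\<^sub>R v \<and> Ts i v = \<alpha> *\<^sub>R v - \<beta> *\<^sub>R u"
    using noR by blast
  have c: "CARD('n) \<le> 6 \<and> dim (derived br UNIV) \<le> 4" by (rule caseC[OF u v ind rot])
  have "dim (derived br UNIV) \<noteq> 3"
  proof
    assume "dim (derived br UNIV) = 3"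
    thus False using cf.odd3 noR by blast
  qed
  thus ?thesis using c n6 m3 by simp
qed

end

theorem mainTheorem2:
  fixes br :: "real^'n \<Rightarrow> real^'n \<Rightarrow> real^'n"
  assumes "one_step_solvable br"
    and "MD_algebra (CARD('n) - 2) br"
    and "CARD('n) \<ge> 6"
    and "dim (derived br UNIV) \<ge> 3"
  shows "CARD('n) = 6 \<and> dim (derived br UNIV) = 4"
proof -
  interpret lie1 br using assms by unfold_locales
  show ?thesis by (rule final)
qed

end
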